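(* In the setting of the context, let \[ I(t)=N-\tilde S e^{(\beta/\gamma)\tilde R}\varphi^{-1}(t)+\frac{\gamma}{\beta}\log\varphi^{-1}(t)-\tilde E e^{-\delta t}-\tilde S e^{(\beta/\gamma)\tilde R}e^{-\delta t}\int_{\varphi^{-1}(t)}^{u_0}e^{\delta\varphi(v)}dv\qquad(t\ge0). \] Then $I(\infty):=\lim_{t\to\infty}I(t)=0$, $I(t)>0$ on $[0,\infty)$, and $I$ attains its maximum $\max_{t\ge0}I(t)$ at some $t=T_2\in\{T: I'(T)=0\}$, where for $T>0$ \[ I'(T)=-\frac{\gamma+\delta}{\beta}\psi\bigl(\varphi^{-1}(T)\bigr)+\delta\Bigl(N-\tilde S e^{(\beta/\gamma)\tilde R}\varphi^{-1}(T)+\frac{\gamma}{\beta}\log\varphi^{-1}(T)\Bigr). \]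
   Context: Let $\beta,\gamma,\delta>0$ be constants and $\tilde S,\tilde E,\tilde I,\tilde R$ real numbers with $N:=\tilde S+\tilde E+\tilde I+\tilde R>0$. Standing assumptions: (A1) $\tilde I>0$; (A2) $\tilde E>(\gamma/\delta)\tilde I$; (A3) $\tilde S>\delta\tilde E/(\beta\tilde I)$; (A4) $\tilde R\ge 0$ and $N>\tilde S e^{(\beta/\gamma)\tilde R}+\tilde R$. Let $\alpha$ be the unique solution in $(\tilde R,N)$ of $x=N-\tilde S e^{(\beta/\gamma)\tilde R}e^{-(\beta/\gamma)x}$, and assume (A5) $\tilde S<(\gamma/\beta)e^{(\beta/\gamma)(\alpha-\tilde R)}$. Put $u_0:=e^{-(\beta/\gamma)\tilde R}$, $u_\infty:=e^{-(\beta/\gamma)\alpha}$. Let $\psi$ be the unique function, continuous and positive on $(u_\infty,u_0]$ and $C^1$ on $(u_\infty,u_0)$, satisfying $\psi'(u)\psi(u)-\frac{\gamma+\delta}{u}\psi(u)=-\delta\,\frac{\beta N-\beta\tilde S e^{(\beta/\gamma)\tilde R}u+\gamma\log u}{u}$ on $(u_\infty,u_0)$ and $\psi(u_0)=\beta\tilde I$. Let $\varphi(u):=\int_u^{u_0}\frac{d\xi}{\xi\psi(\xi)}$; $\varphi$ is a strictly decreasing continuous bijection from $(u_\infty,u_0]$ onto $[0,\infty)$, $C^1$ on $(u_\infty,u_0)$, with inverse $\varphi^{-1}:[0,\infty)\to(u_\infty,u_0]$. *)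

theory Defs
  imports "HOL-Analysis.Analysis"
begin

definition phiF :: "(real \<Rightarrow> real) \<Rightarrow> real \<Rightarrow> real \<Rightarrow> real" where
  "phiF \<psi> u0 u = integral {u..u0} (\<lambda>\<xi>. 1 / (\<xi> * \<psi> \<xi>))"

text \<open>inverse of varphi, as a map from [0,oo) to (u_inf, u0]\<close>
definition phiInv :: "(real \<Rightarrow> real) \<Rightarrow> real \<Rightarrow> real \<Rightarrow> real \<Rightarrow> real" where
  "phiInv \<psi> uinf u0 t = inv_into {uinf<..u0} (phiF \<psi> u0) t"

definition Ifun :: "real \<Rightarrow> real \<Rightarrow> real \<Rightarrow> real \<Rightarrow> real \<Rightarrow> real \<Rightarrow> real \<Rightarrow>
    (real \<Rightarrow> real) \<Rightarrow> real \<Rightarrow> real \<Rightarrow> real \<Rightarrow> real" where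
  "Ifun \<beta> \<gamma> \<delta> S E R N \<psi> uinf u0 t =
     N - S * exp ((\<beta>/\<gamma>) * R) * phiInv \<psi> uinf u0 t
       + (\<gamma>/\<beta>) * ln (phiInv \<psi> uinf u0 t)
       - E * exp (- \<delta> * t)
       - S * exp ((\<beta>/\<gamma>) * R) * exp (- \<delta> * t)
           * integral {phiInv \<psi> uinf u0 t..u0} (\<lambda>v. exp (\<delta> * phiF \<psi> u0 v))"

end

theory Submission
  imports Defs "HOL-Analysis.Analysis"
begin


lemma lower_int_deriv:
  fixes h :: "real \<Rightarrow> real"
  assumes ch: "continuous_on {l<..r} h" and x: "l < x" "x < r"
  shows "((\<lambda>y. integral {y..r} h) has_real_derivative - h x) (at x)"
proof -
  define a where "a = (l + x) / 2"
  have a: "l < a" "a < x" using x unfolding a_def by auto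
  have ca: "continuous_on {a..r} h" using a by (intro continuous_on_subset[OF ch]) auto
  have d1: "((\<lambda>y. integral {a..y} h) has_real_derivative h x) (at x within {a..r})"
    by (rule integral_has_real_derivative[OF ca]) (use a x in auto)
  have d2: "((\<lambda>y. integral {a..r} h - integral {a..y} h) has_real_derivative 0 - h x) (at x within {a..r})"
    by (intro DERIV_diff DERIV_const d1)
  have d3: "((\<lambda>y. integral {y..r} h) has_real_derivative 0 - h x) (at x within {a..r})"
  proof (rule has_field_derivative_transform_within[OF d2])
    show "0 < x - a" using a by simp
    show "x \<in> {a..r}" using a x by simp
    fix y assume y: "y \<in> {a..r}"
    have "integral {a..y} h + integral {y..r} h = integral {a..r} h"
      using Henstock_Kurzweil_Integration.integral_combine[of a y r h] y integrable_continuous_interval[OF ca] by auto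
    then show "integral {a..r} h - integral {a..y} h = integral {y..r} h" by simp
  qed
  have "x \<in> interior {a..r}" using a x by simp
  then have eq: "at x within {a..r} = at x" by (rule at_within_interior)
  show ?thesis using d3 unfolding eq by simp
qed

lemma lower_int_cont:
  fixes h :: "real \<Rightarrow> real"
  assumes ch: "continuous_on {l<..r} h" and a: "l < a"
  shows "continuous_on {a..r} (\<lambda>y. integral {y..r} h)"
proof (cases "a \<le> r")
  case True
  have ca: "continuous_on {a..r} h" using a by (intro continuous_on_subset[OF ch]) auto
  have "continuous_on {a..r} (\<lambda>y. integral {a..r} h - integral {a..y} h)"
    by (intro continuous_on_diff continuous_on_const indefinite_integral_continuous_1 integrable_continuous_interval[OF ca])
  moreover have "integral {a..r} h - integral {a..y} h = integral {y..r} h" if y: "y \<in> {a..r}" for y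
  proof -
    have "integral {a..y} h + integral {y..r} h = integral {a..r} h"
      using Henstock_Kurzweil_Integration.integral_combine[of a y r h] y integrable_continuous_interval[OF ca] by auto
    then show ?thesis by simp
  qed
  ultimately show ?thesis by (rule continuous_on_eq)
next
  case False
  then show ?thesis by simp
qed

locale seir =
  fixes \<beta> \<gamma> \<delta> S E I R N \<alpha> u0 uinf C K :: real
    and \<psi> \<psi>' F g phi P :: "real \<Rightarrow> real"
  assumes pos: "\<beta> > 0" "\<gamma> > 0" "\<delta> > 0"
    and N_def: "N = S + E + I + R"
    and A1: "I > 0"
    and A2: "E > (\<gamma>/\<delta>) * I"
    and A3: "S > \<delta> * E / (\<beta> * I)"
    and alpha: "R < \<alpha>" "\<alpha> < N"
      "\<alpha> = N - S * exp ((\<beta>/\<gamma>) * R) * exp (- (\<beta>/\<gamma>) * \<alpha>)"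
    and A5: "S < (\<gamma>/\<beta>) * exp ((\<beta>/\<gamma>) * (\<alpha> - R))"
    and u0_def: "u0 = exp (- (\<beta>/\<gamma>) * R)"
    and uinf_def: "uinf = exp (- (\<beta>/\<gamma>) * \<alpha>)"
    and psi_cont: "continuous_on {uinf<..u0} \<psi>"
    and psi_pos: "\<forall>u\<in>{uinf<..u0}. \<psi> u > 0"
    and psi_deriv: "\<forall>u\<in>{uinf<..<u0}. (\<psi> has_real_derivative \<psi>' u) (at u)"
    and psi_ode: "\<forall>u\<in>{uinf<..<u0}.
        \<psi>' u * \<psi> u - ((\<gamma> + \<delta>) / u) * \<psi> u
          = - \<delta> * (\<beta> * N - \<beta> * S * exp ((\<beta>/\<gamma>) * R) * u + \<gamma> * ln u) / u"
    and psi_init: "\<psi> u0 = \<beta> * I"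
    and C_def: "C = S * exp ((\<beta>/\<gamma>) * R)"
    and F_def: "F = (\<lambda>u. \<beta> * N - \<beta> * C * u + \<gamma> * ln u)"
    and K_def: "K = \<gamma> / uinf - \<beta> * C"
    and g_def: "g = (\<lambda>\<xi>. 1 / (\<xi> * \<psi> \<xi>))"
    and phi_def: "phi = phiF \<psi> u0"
    and P_def: "P = phiInv \<psi> uinf u0"
begin

lemma Epos: "E > 0"
proof -
  have "(\<gamma>/\<delta>) * I > 0" using A1 pos by simp
  then show ?thesis using A2 by linarith
qed
lemma Spos: "S > 0"
proof -
  have "\<delta> * E / (\<beta> * I) > 0" using A1 pos Epos by simp
  then show ?thesis using A3 by linarith
qed
lemma Cpos: "C > 0" using Spos C_def by simp
lemma uinf_pos: "uinf > 0" using uinf_def by simp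
lemma u_lt: "uinf < u0"
proof -
  have "(\<beta>/\<gamma>)*R < (\<beta>/\<gamma>)*\<alpha>" using pos alpha(1) by (intro mult_strict_left_mono) simp_all
  then show ?thesis using uinf_def u0_def by simp
qed
lemma Cu0: "C * u0 = S" using C_def u0_def by (simp add: mult_exp_exp)
lemma lnu0: "\<gamma> * ln u0 = - \<beta> * R" using u0_def pos by simp
lemma Cuinf: "C * uinf < \<gamma> / \<beta>"
proof -
  have "C * uinf = S * exp ((\<beta>/\<gamma>) * R - (\<beta>/\<gamma>) * \<alpha>)"
    using C_def uinf_def by (simp add: exp_add[symmetric] algebra_simps)
  also have "\<dots> = S / exp ((\<beta>/\<gamma>) * (\<alpha> - R))"
  proof -
    have "(\<beta>/\<gamma>) * R - (\<beta>/\<gamma>) * \<alpha> = - ((\<beta>/\<gamma>) * (\<alpha> - R))" by (simp only: right_diff_distrib minus_diff_eq)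
    then show ?thesis by (simp add: exp_minus divide_inverse)
  qed
  also have "\<dots> < \<gamma>/\<beta>" using A5 by (simp add: divide_less_eq mult.commute)
  finally show ?thesis .
qed
lemma Kpos: "K > 0"
proof -
  have "K * uinf = \<gamma> - \<beta> * (C * uinf)" using K_def uinf_pos by (simp add: field_simps)
  moreover have "\<beta> * (C * uinf) < \<gamma>" using Cuinf pos by (simp add: field_simps)
  ultimately have "K * uinf > 0" by simp
  then show ?thesis using uinf_pos by (simp add: zero_less_mult_iff)
qed
lemma F_uinf: "F uinf = 0"
proof -
  have "C * uinf = S * exp ((\<beta>/\<gamma>) * R) * exp (- (\<beta>/\<gamma>) * \<alpha>)" using C_def uinf_def by simp
  then have "C * uinf = N - \<alpha>" using alpha(3) by simp
  moreover have "\<gamma> * ln uinf = - \<beta> * \<alpha>" using uinf_def pos by simp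
  ultimately have "\<beta> * (C * uinf) = \<beta> * (N - \<alpha>)" "\<gamma> * ln uinf = - \<beta> * \<alpha>" by simp_all
  then show ?thesis unfolding F_def by (simp add: algebra_simps)
qed
lemma F_u0: "F u0 = \<beta> * (E + I)"
  using Cu0 lnu0 N_def unfolding F_def by (simp add: algebra_simps)

lemma F_upper: assumes "u > uinf" shows "F u \<le> K * (u - uinf)"
proof -
  have "ln (u / uinf) \<le> u / uinf - 1" using assms uinf_pos by (intro ln_le_minus_one) simp
  hence "\<gamma> * ln (u/uinf) \<le> \<gamma> * (u / uinf - 1)" using pos by (simp add: mult_left_mono)
  moreover have "ln (u/uinf) = ln u - ln uinf" using assms uinf_pos by (simp add: ln_div)
  moreover have "F u = F u - F uinf" using F_uinf by simp
  ultimately have "\<gamma> * (ln u - ln uinf) \<le> \<gamma> * (u / uinf - 1)" by simp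
  moreover have "\<gamma> * (u / uinf - 1) = (\<gamma> / uinf) * (u - uinf)" using uinf_pos by (simp add: field_simps)
  moreover have "F u - F uinf = - \<beta> * C * (u - uinf) + \<gamma> * (ln u - ln uinf)" unfolding F_def by (simp add: algebra_simps)
  ultimately show ?thesis using F_uinf unfolding K_def by (simp add: algebra_simps)
qed

lemma F_deriv: assumes "x > 0" shows "(F has_real_derivative (\<gamma> / x - \<beta> * C)) (at x)"
  unfolding F_def using assms by (auto intro!: derivative_eq_intros simp: field_simps)

lemma F_cont: "continuous_on {a..b} F" if "a > 0" for a b
proof -
  have "\<forall>x\<in>{a..b}. isCont F x" using F_deriv that by (meson DERIV_isCont atLeastAtMost_iff less_le_trans)
  then show ?thesis by (simp add: continuous_at_imp_continuous_on)
qed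

lemma F_pos: assumes "uinf < u" "u \<le> u0" shows "F u > 0"
proof (cases "\<gamma> / u - \<beta> * C > 0")
  case True
  have u: "u > 0" using assms uinf_pos by simp
  have "ln (uinf / u) \<le> uinf / u - 1" using assms uinf_pos by (intro ln_le_minus_one) simp
  moreover have "ln (uinf / u) = ln uinf - ln u" using u uinf_pos by (simp add: ln_div)
  ultimately have "ln u - ln uinf \<ge> (u - uinf) / u" using u by (simp add: field_simps)
  hence "\<gamma> * (ln u - ln uinf) \<ge> \<gamma> * ((u - uinf) / u)" by (rule mult_left_mono) (use pos in auto)
  moreover have "F u - F uinf = - \<beta> * C * (u - uinf) + \<gamma> * (ln u - ln uinf)" unfolding F_def by (simp add: algebra_simps)
  moreover have "\<gamma> * ((u - uinf) / u) - \<beta> * C * (u - uinf) = (u - uinf) * (\<gamma> / u - \<beta> * C)"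
    by (simp add: algebra_simps)
  moreover have "(u - uinf) * (\<gamma> / u - \<beta> * C) > 0" using True assms by simp
  ultimately show ?thesis using F_uinf by linarith
next
  case False
  have u: "u > 0" using assms uinf_pos by simp
  have "ln (u0 / u) \<le> u0 / u - 1" using assms u by (intro ln_le_minus_one) simp
  moreover have "ln (u0 / u) = ln u0 - ln u" using u u_lt uinf_pos by (simp add: ln_div)
  ultimately have "ln u0 - ln u \<le> (u0 - u) / u" using u by (simp add: field_simps)
  hence "\<gamma> * (ln u0 - ln u) \<le> \<gamma> * ((u0 - u) / u)" by (rule mult_left_mono) (use pos in auto)
  moreover have "F u0 - F u = - \<beta> * C * (u0 - u) + \<gamma> * (ln u0 - ln u)" unfolding F_def by (simp add: algebra_simps)
  moreover have "\<gamma> * ((u0 - u) / u) - \<beta> * C * (u0 - u) = (u0 - u) * (\<gamma> / u - \<beta> * C)"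
    by (simp add: algebra_simps)
  moreover have "(u0 - u) * (\<gamma> / u - \<beta> * C) \<le> 0" using False assms by (simp add: mult_nonneg_nonpos)
  moreover have "F u0 > 0" using F_u0 pos A1 Epos by simp
  ultimately show ?thesis by linarith
qed

lemma psi'_eq: assumes "u \<in> {uinf<..<u0}" shows "\<psi>' u = (\<gamma> + \<delta>) / u - \<delta> * F u / (u * \<psi> u)"
proof -
  have p: "\<psi> u > 0" using psi_pos assms by auto
  have u: "u > 0" using assms uinf_pos by auto
  have "\<psi>' u * \<psi> u - ((\<gamma> + \<delta>) / u) * \<psi> u = - \<delta> * F u / u"
    using psi_ode assms unfolding F_def C_def by (simp add: algebra_simps)
  then show ?thesis using p u by (simp add: field_simps)
qed

lemma psi_lt_F: assumes "uinf < v" "v \<le> u0" shows "\<psi> v < F v"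
proof (rule ccontr)
  define e where "e = (\<lambda>x. F x - \<psi> x)"
  assume "\<not> \<psi> v < F v"
  hence ev: "e v \<le> 0" unfolding e_def by simp
  have vpos: "v > 0" using assms uinf_pos by simp
  have eu0: "e u0 > 0" unfolding e_def using F_u0 psi_init pos Epos by (simp add: algebra_simps)
  have ce: "continuous_on {v..u0} e" unfolding e_def
    by (intro continuous_on_diff F_cont vpos continuous_on_subset[OF psi_cont]) (use assms in auto)
  define Z where "Z = {x \<in> {v..u0}. e x \<le> (\<lambda>_. 0) x}"
  have "closed Z" unfolding Z_def by (rule continuous_on_closed_Collect_le[OF ce continuous_on_const]) simp
  moreover have "bounded Z" unfolding Z_def by (rule bounded_subset[OF bounded_closed_interval]) auto
  ultimately have "compact Z" by (simp add: compact_eq_bounded_closed)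
  moreover have "Z \<noteq> {}" unfolding Z_def using ev assms by auto
  ultimately obtain u1 where u1: "u1 \<in> Z" "\<forall>t\<in>Z. t \<le> u1" using compact_attains_sup by blast
  have u1r: "v \<le> u1" "u1 \<le> u0" "e u1 \<le> 0" using u1 unfolding Z_def by auto
  have "u1 \<noteq> u0" using eu0 u1r by auto
  hence u1i: "u1 \<in> {uinf<..<u0}" using u1r assms by auto
  have u1p: "u1 > 0" using u1i uinf_pos by auto
  have psip: "\<psi> u1 > 0" using psi_pos u1i by auto
  have Fp: "F u1 > 0" using F_pos u1i by auto
  have de: "(e has_real_derivative (\<gamma> / u1 - \<beta> * C) - \<psi>' u1) (at u1)"
    unfolding e_def using F_deriv[OF u1p] psi_deriv u1i by (auto intro: derivative_intros)
  have "F u1 \<le> \<psi> u1" using u1r unfolding e_def by simp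
  hence "F u1 / (u1 * \<psi> u1) \<le> 1 / u1" using psip u1p by (simp add: divide_simps)
  hence "\<delta> * (F u1 / (u1 * \<psi> u1)) \<le> \<delta> * (1 / u1)" by (rule mult_left_mono) (use pos in auto)
  hence X: "\<delta> * F u1 / (u1 * \<psi> u1) \<le> \<delta> / u1" by simp
  have Y: "(\<gamma> + \<delta>) / u1 = \<gamma> / u1 + \<delta> / u1" by (simp add: add_divide_distrib)
  have "(\<gamma> / u1 - \<beta> * C) - \<psi>' u1 \<le> - \<beta> * C"
  proof -
    have "\<psi>' u1 = \<gamma> / u1 + \<delta> / u1 - \<delta> * F u1 / (u1 * \<psi> u1)" using psi'_eq[OF u1i] Y by simp
    then show ?thesis using X by linarith
  qed
  hence "(\<gamma> / u1 - \<beta> * C) - \<psi>' u1 < 0" proof -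
    have "\<beta> * C > 0" using Cpos pos by simp
    then show ?thesis using \<open>(\<gamma> / u1 - \<beta> * C) - \<psi>' u1 \<le> - \<beta> * C\<close> by linarith
  qed
  from DERIV_neg_dec_right[OF de this] obtain d where d: "d > 0" "\<forall>h>0. h < d \<longrightarrow> e u1 > e (u1 + h)" by blast
  define h where "h = min (d/2) ((u0 - u1)/2)"
  have "h \<le> (u0 - u1)/2" unfolding h_def by (rule min.cobounded2)
  moreover have "h \<le> d/2" unfolding h_def by (rule min.cobounded1)
  moreover have "h > 0" using d u1i unfolding h_def by auto
  ultimately have h: "h > 0" "h < d" "u1 + h \<le> u0" using d u1i by auto
  have "e (u1 + h) < e u1" using d h by auto
  hence "u1 + h \<in> Z" unfolding Z_def using h u1r by auto
  then show False using u1 h by auto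
qed

lemma psi_bound: assumes "uinf < v" "v \<le> u0" shows "\<psi> v < K * (v - uinf)"
  using psi_lt_F[OF assms] F_upper assms by fastforce

lemma g_cont: "continuous_on {uinf<..u0} g"
  unfolding g_def using psi_pos uinf_pos
  by (intro continuous_on_divide continuous_on_const continuous_on_mult continuous_on_id psi_cont) auto

lemma g_pos: "x \<in> {uinf<..u0} \<Longrightarrow> g x > 0"
  unfolding g_def using psi_pos uinf_pos by auto

lemma phi_eq: "phi u = integral {u..u0} g"
  unfolding phi_def phiF_def g_def by simp

lemma phi_deriv: "u \<in> {uinf<..<u0} \<Longrightarrow> (phi has_real_derivative - g u) (at u)"
  unfolding phi_eq[abs_def] by (rule lower_int_deriv[OF g_cont]) auto

lemma phi_cont: "uinf < a \<Longrightarrow> continuous_on {a..u0} phi"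
  unfolding phi_eq[abs_def] by (rule lower_int_cont[OF g_cont])

lemma phi_u0: "phi u0 = 0" unfolding phi_eq by simp

lemma phi_strict: assumes "uinf < u" "u < v" "v \<le> u0" shows "phi v < phi u"
proof -
  have cont: "continuous_on {u..v} phi" using phi_cont[OF assms(1)] by (rule continuous_on_subset) (use assms in auto)
  have dif: "phi differentiable (at x)" if "u < x" "x < v" for x
  proof -
    have "(phi has_real_derivative - g x) (at x)" using phi_deriv assms that by auto
    then show "phi differentiable (at x)" by (auto simp: real_differentiable_def)
  qed
  obtain l z where z: "u < z" "z < v" "DERIV phi z :> l" "phi v - phi u = (v - u) * l"
    using MVT[OF assms(2) cont dif] by blast
  have "l = - g z" using DERIV_unique[OF z(3) phi_deriv] z assms by auto
  moreover have "g z > 0" using g_pos z assms by auto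
  ultimately have "(v - u) * l < 0" using assms by (simp add: mult_pos_neg)
  then show ?thesis using z by simp
qed

lemma phi_mono: assumes "uinf < u" "u \<le> v" "v \<le> u0" shows "phi v \<le> phi u"
  using phi_strict[of u v] assms by (cases "u = v") auto

lemma phi_nonneg: assumes "uinf < u" "u \<le> u0" shows "phi u \<ge> 0"
  using phi_mono[OF assms(1,2)] phi_u0 by simp

lemma phi_inj: "inj_on phi {uinf<..u0}"
proof (rule inj_onI)
  fix x y assume "x \<in> {uinf<..u0}" "y \<in> {uinf<..u0}" "phi x = phi y"
  then show "x = y" using phi_strict[of x y] phi_strict[of y x] by (cases x y rule: linorder_cases) auto
qed

lemma phi_lower: assumes u: "uinf < u" "u \<le> u0"
  shows "phi u \<ge> (1 / (u0 * K)) * (ln (u0 - uinf) - ln (u - uinf))"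
proof -
  define c where "c = 1 / (u0 * K)"
  have c: "c > 0" unfolding c_def using Kpos u_lt uinf_pos by simp
  have der: "((\<lambda>x. c * ln (x - uinf)) has_vector_derivative (c / (x - uinf))) (at x within {u..u0})"
    if "x \<in> {u..u0}" for x
  proof -
    have "x - uinf > 0" using that u by auto
    then have "((\<lambda>x. c * ln (x - uinf)) has_real_derivative (c * (1 / (x - uinf)))) (at x)"
      by (intro derivative_eq_intros refl) auto
    then show ?thesis by (simp add: has_real_derivative_iff_has_vector_derivative[symmetric] has_field_derivative_at_within)
  qed
  have hi: "((\<lambda>x. c / (x - uinf)) has_integral (c * ln (u0 - uinf) - c * ln (u - uinf))) {u..u0}"
    using fundamental_theorem_of_calculus[OF u(2) der] by simp
  have "integral {u..u0} (\<lambda>x. c / (x - uinf)) \<le> integral {u..u0} g"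
  proof (rule integral_le)
    show "(\<lambda>x. c / (x - uinf)) integrable_on {u..u0}" using hi by blast
    show "g integrable_on {u..u0}"
      by (rule integrable_continuous_interval, rule continuous_on_subset[OF g_cont]) (use u in auto)
    fix x assume x: "x \<in> {u..u0}"
    have xp: "x > 0" "x - uinf > 0" using x u uinf_pos by auto
    have ps: "\<psi> x > 0" using psi_pos x u by auto
    have "\<psi> x < K * (x - uinf)" using psi_bound x u by auto
    hence "x * \<psi> x \<le> x * (K * (x - uinf))" using xp by simp
    also have "\<dots> \<le> u0 * (K * (x - uinf))" using x xp Kpos by (intro mult_right_mono) auto
    finally have "x * \<psi> x \<le> u0 * K * (x - uinf)" by (simp add: mult.assoc)
    hence "1 / (u0 * K * (x - uinf)) \<le> 1 / (x * \<psi> x)" using xp ps Kpos u_lt uinf_pos by (intro divide_left_mono) (auto intro!: mult_pos_pos)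
    then show "c / (x - uinf) \<le> g x" unfolding c_def g_def by simp
  qed
  then show ?thesis using hi unfolding phi_eq c_def by (simp add: integral_unique right_diff_distrib)
qed

lemma phi_big: assumes "t \<ge> 0" shows "\<exists>a. uinf < a \<and> a \<le> u0 \<and> phi a \<ge> t"
proof -
  define c where "c = 1 / (u0 * K)"
  have c: "c > 0" unfolding c_def using Kpos u_lt uinf_pos by simp
  define a where "a = uinf + (u0 - uinf) * exp (- t / c)"
  have e1: "exp (- t / c) \<le> 1" using assms c by simp
  have "(u0 - uinf) * exp (- t / c) \<le> (u0 - uinf) * 1" by (rule mult_left_mono) (use e1 u_lt in auto)
  then have "(u0 - uinf) * exp (- t / c) \<le> u0 - uinf" by simp
  then have a2: "a \<le> u0" unfolding a_def by linarith
  have "(u0 - uinf) * exp (- t / c) > 0" using u_lt by simp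
  then have a: "uinf < a" "a \<le> u0" using a2 unfolding a_def by linarith+
  have "ln (a - uinf) = ln (u0 - uinf) - t / c" unfolding a_def using u_lt by (simp add: ln_mult)
  hence "c * (ln (u0 - uinf) - ln (a - uinf)) = t" using c by simp
  then show ?thesis using phi_lower[OF a] a unfolding c_def by auto
qed

end


lemma lower_int_deriv':
  fixes h :: "real \<Rightarrow> real"
  assumes ch: "\<And>a. l < a \<Longrightarrow> continuous_on {a..r} h" and x: "l < x" "x < r"
  shows "((\<lambda>y. integral {y..r} h) has_real_derivative - h x) (at x)"
proof -
  define a where "a = (l + x) / 2"
  have a: "l < a" "a < x" using x unfolding a_def by auto
  have ca: "continuous_on {a..r} h" using ch a by simp
  have d1: "((\<lambda>y. integral {a..y} h) has_real_derivative h x) (at x within {a..r})"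
    by (rule integral_has_real_derivative[OF ca]) (use a x in auto)
  have d2: "((\<lambda>y. integral {a..r} h - integral {a..y} h) has_real_derivative 0 - h x) (at x within {a..r})"
    by (intro DERIV_diff DERIV_const d1)
  have d3: "((\<lambda>y. integral {y..r} h) has_real_derivative 0 - h x) (at x within {a..r})"
  proof (rule has_field_derivative_transform_within[OF d2])
    show "0 < x - a" using a by simp
    show "x \<in> {a..r}" using a x by simp
    fix y assume y: "y \<in> {a..r}"
    have "integral {a..y} h + integral {y..r} h = integral {a..r} h"
      using Henstock_Kurzweil_Integration.integral_combine[of a y r h] y integrable_continuous_interval[OF ca] by auto
    then show "integral {a..r} h - integral {a..y} h = integral {y..r} h" by simp
  qed
  have "x \<in> interior {a..r}" using a x by simp
  then have eq: "at x within {a..r} = at x" by (rule at_within_interior)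
  show ?thesis using d3 unfolding eq by simp
qed

context seir begin

definition h :: "real \<Rightarrow> real" where "h v = exp (\<delta> * phi v)"
definition J :: "real \<Rightarrow> real" where "J x = integral {x..u0} h"

lemma h_cont: "uinf < a \<Longrightarrow> continuous_on {a..u0} h"
  unfolding h_def[abs_def] by (intro continuous_on_exp continuous_on_mult continuous_on_const phi_cont)

lemma J_deriv: "x \<in> {uinf<..<u0} \<Longrightarrow> (J has_real_derivative - h x) (at x)"
  unfolding J_def[abs_def] by (rule lower_int_deriv'[OF h_cont]) auto

lemma J_cont: "uinf < a \<Longrightarrow> continuous_on {a..u0} J"
proof -
  assume a: "uinf < a"
  show ?thesis
  proof (cases "a \<le> u0")
    case True
    have ca: "continuous_on {a..u0} h" using h_cont a by simp
    have "continuous_on {a..u0} (\<lambda>y. integral {a..u0} h - integral {a..y} h)"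
      by (intro continuous_on_diff continuous_on_const indefinite_integral_continuous_1 integrable_continuous_interval[OF ca])
    moreover have "integral {a..u0} h - integral {a..y} h = J y" if y: "y \<in> {a..u0}" for y
    proof -
      have "integral {a..y} h + integral {y..u0} h = integral {a..u0} h"
        using Henstock_Kurzweil_Integration.integral_combine[of a y u0 h] y integrable_continuous_interval[OF ca] by auto
      then show ?thesis unfolding J_def by simp
    qed
    ultimately show ?thesis by (rule continuous_on_eq)
  next
    case False
    then show ?thesis by simp
  qed
qed

lemma J_u0: "J u0 = 0" unfolding J_def by simp

lemma phi_image: assumes "uinf < a" "a \<le> u0" shows "phi ` {a..u0} = {0..phi a}"
proof
  show "phi ` {a..u0} \<subseteq> {0..phi a}"
    using phi_nonneg phi_mono assms by fastforce
  show "{0..phi a} \<subseteq> phi ` {a..u0}"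
  proof
    fix y assume y: "y \<in> {0..phi a}"
    have "\<exists>x. a \<le> x \<and> x \<le> u0 \<and> phi x = y"
      by (rule IVT2') (use y phi_u0 assms phi_cont[OF assms(1)] in auto)
    then show "y \<in> phi ` {a..u0}" by force
  qed
qed

lemma P_eq: "P t = inv_into {uinf<..u0} phi t" unfolding P_def phiInv_def phi_def by simp

lemma phi_surj: assumes "t \<ge> 0" shows "t \<in> phi ` {uinf<..u0}"
proof -
  obtain a where a: "uinf < a" "a \<le> u0" "phi a \<ge> t" using phi_big[OF assms] by blast
  then have "t \<in> phi ` {a..u0}" using phi_image[OF a(1,2)] assms by auto
  moreover have "{a..u0} \<subseteq> {uinf<..u0}" using a by auto
  ultimately show ?thesis by blast
qed

lemma P_in: assumes "t \<ge> 0" shows "P t \<in> {uinf<..u0}" "phi (P t) = t"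
  using inv_into_into[OF phi_surj[OF assms]] f_inv_into_f[OF phi_surj[OF assms]] unfolding P_eq by auto

lemma P_phi: "u \<in> {uinf<..u0} \<Longrightarrow> P (phi u) = u"
  unfolding P_eq by (rule inv_into_f_f[OF phi_inj])

lemma P_0: "P 0 = u0" using P_phi[of u0] phi_u0 u_lt by simp

lemma P_lt: assumes "t > 0" shows "P t < u0"
proof -
  have "P t \<noteq> u0" using P_in[of t] assms phi_u0 by auto
  then show ?thesis using P_in[of t] assms by auto
qed

lemma P_ge: assumes "uinf < a" "a \<le> u0" "0 \<le> t" "t \<le> phi a" shows "a \<le> P t"
proof (rule ccontr)
  assume "\<not> a \<le> P t"
  then have "phi a < phi (P t)" using phi_strict[of "P t" a] P_in[OF assms(3)] assms by auto
  then show False using P_in[OF assms(3)] assms by simp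
qed

lemma P_cont_a: assumes "uinf < a" "a \<le> u0" shows "continuous_on {0..phi a} P"
proof -
  have "continuous_on (phi ` {a..u0}) P"
    by (rule continuous_on_inv[OF phi_cont[OF assms(1)] compact_Icc]) (use P_phi assms in auto)
  then show ?thesis using phi_image[OF assms] by simp
qed

lemma P_cont_gen: assumes "T \<ge> 0"
  shows "\<exists>a. uinf < a \<and> a \<le> u0 \<and> continuous_on {0..T} P \<and> P ` {0..T} \<subseteq> {a..u0}"
proof -
  obtain a where a: "uinf < a" "a \<le> u0" "phi a \<ge> T" using phi_big[OF assms] by blast
  have "continuous_on {0..T} P" by (intro continuous_on_subset[OF P_cont_a[OF a(1,2)]]) (use a(3) in auto)
  moreover have "P ` {0..T} \<subseteq> {a..u0}" using P_ge[OF a(1,2)] a(3) P_in by force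
  ultimately show ?thesis using a by blast
qed

lemma P_deriv: assumes "t > 0" shows "(P has_real_derivative - (P t * \<psi> (P t))) (at t)"
proof -
  have Pi: "P t \<in> {uinf<..<u0}" using P_in[of t] P_lt[OF assms] assms by auto
  obtain a where "uinf < a" "a \<le> u0" "continuous_on {0..t+1} P" "P ` {0..t+1} \<subseteq> {a..u0}"
    using P_cont_gen[of "t+1"] assms by auto
  then have cP: "isCont P t" using assms by (intro continuous_on_interior[of "{0..t+1}"]) auto
  have "DERIV P t :> inverse (- g (P t))"
    by (rule DERIV_inverse_function[where a=0 and b="t+1"])
       (use phi_deriv[OF Pi] g_pos[of "P t"] Pi assms P_in cP in auto)
  moreover have "inverse (- g (P t)) = - (P t * \<psi> (P t))" unfolding g_def by simp
  ultimately show ?thesis by simp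
qed

lemma P_mono: assumes "0 \<le> s" "s \<le> t" shows "P t \<le> P s"
proof (rule ccontr)
  assume "\<not> P t \<le> P s"
  then have "phi (P t) < phi (P s)" using phi_strict[of "P s" "P t"] P_in assms by auto
  then show False using P_in assms by simp
qed

lemma P_small: assumes "\<epsilon> > 0" shows "\<exists>T. \<forall>t\<ge>T. P t < uinf + \<epsilon>"
proof -
  define v where "v = min (uinf + \<epsilon>/2) u0"
  have v: "uinf < v" "v \<le> u0" "v < uinf + \<epsilon>" using assms u_lt unfolding v_def by auto
  have "P t < uinf + \<epsilon>" if t: "t \<ge> phi v + 1" for t
  proof (rule ccontr)
    assume "\<not> P t < uinf + \<epsilon>"
    then have "v \<le> P t" using v by auto
    have t0: "t \<ge> 0" using t phi_nonneg[OF v(1,2)] by simp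
    have "phi (P t) \<le> phi v" using phi_mono[of v "P t"] \<open>v \<le> P t\<close> P_in[OF t0] v by auto
    then show False using P_in[OF t0] t by simp
  qed
  then show ?thesis by blast
qed

end


context seir begin

definition Aq :: "real \<Rightarrow> real" where "Aq u = N - C * u + (\<gamma>/\<beta>) * ln u"

lemma F_Aq: "F u = \<beta> * Aq u"
  unfolding F_def Aq_def using pos by (simp add: field_simps)

lemma If_eq: "Ifun \<beta> \<gamma> \<delta> S E R N \<psi> uinf u0 t
   = Aq (P t) - E * exp (- \<delta> * t) - C * exp (- \<delta> * t) * J (P t)"
  unfolding Aq_def J_def h_def[abs_def] Ifun_def P_def[symmetric] phi_def[symmetric] C_def[symmetric] by simp

lemma If_fun: "Ifun \<beta> \<gamma> \<delta> S E R N \<psi> uinf u0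
   = (\<lambda>t. Aq (P t) - E * exp (- \<delta> * t) - C * exp (- \<delta> * t) * J (P t))"
  by (rule ext) (rule If_eq)

lemma hP: "t \<ge> 0 \<Longrightarrow> h (P t) = exp (\<delta> * t)"
  unfolding h_def using P_in by simp

lemma Pi_open: "t > 0 \<Longrightarrow> P t \<in> {uinf<..<u0}"
  using P_in[of t] P_lt[of t] by auto

lemma JP_deriv: assumes "t > 0"
  shows "((\<lambda>t. J (P t)) has_real_derivative exp (\<delta> * t) * (P t * \<psi> (P t))) (at t)"
proof -
  have "((\<lambda>t. J (P t)) has_real_derivative (- h (P t)) * (- (P t * \<psi> (P t)))) (at t)"
    by (rule DERIV_chain2[OF J_deriv[OF Pi_open[OF assms]] P_deriv[OF assms]])
  then show ?thesis using hP[of t] assms by simp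
qed

lemma Aq_deriv: "u > 0 \<Longrightarrow> (Aq has_real_derivative (- C + (\<gamma>/\<beta>) * (1 / u))) (at u)"
  unfolding Aq_def[abs_def] by (intro derivative_eq_intros refl) auto

lemma AqP_deriv: assumes "t > 0"
  shows "((\<lambda>t. Aq (P t)) has_real_derivative (C * P t * \<psi> (P t) - (\<gamma>/\<beta>) * \<psi> (P t))) (at t)"
proof -
  have u: "P t > 0" using Pi_open[OF assms] uinf_pos by auto
  have "((\<lambda>t. Aq (P t)) has_real_derivative (- C + (\<gamma>/\<beta>) * (1 / P t)) * (- (P t * \<psi> (P t)))) (at t)"
    by (rule DERIV_chain2[OF Aq_deriv[OF u] P_deriv[OF assms]])
  then show ?thesis by (rule DERIV_cong) (use u in \<open>simp add: field_simps\<close>)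
qed

lemma expd: "((\<lambda>t. exp (- \<delta> * t)) has_real_derivative (- \<delta> * exp (- \<delta> * t))) (at t)"
  by (intro derivative_eq_intros refl) auto

lemma If_deriv_raw: assumes "t > 0"
  shows "(Ifun \<beta> \<gamma> \<delta> S E R N \<psi> uinf u0 has_real_derivative
     (- (\<gamma>/\<beta>) * \<psi> (P t) + \<delta> * (Aq (P t) - Ifun \<beta> \<gamma> \<delta> S E R N \<psi> uinf u0 t))) (at t)"
proof -
  have d3: "((\<lambda>t. E * exp (- \<delta> * t)) has_real_derivative E * (- \<delta> * exp (- \<delta> * t))) (at t)"
    by (rule DERIV_cmult[OF expd])
  have d4: "((\<lambda>t. C * exp (- \<delta> * t)) has_real_derivative C * (- \<delta> * exp (- \<delta> * t))) (at t)"
    by (rule DERIV_cmult[OF expd])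
  have d5: "((\<lambda>t. C * exp (- \<delta> * t) * J (P t)) has_real_derivative
      C * (- \<delta> * exp (- \<delta> * t)) * J (P t) + exp (\<delta> * t) * (P t * \<psi> (P t)) * (C * exp (- \<delta> * t))) (at t)"
    by (rule DERIV_mult[OF d4 JP_deriv[OF assms]])
  have d: "((\<lambda>t. Aq (P t) - E * exp (- \<delta> * t) - C * exp (- \<delta> * t) * J (P t)) has_real_derivative
      (C * P t * \<psi> (P t) - (\<gamma>/\<beta>) * \<psi> (P t)) - E * (- \<delta> * exp (- \<delta> * t))
      - (C * (- \<delta> * exp (- \<delta> * t)) * J (P t) + exp (\<delta> * t) * (P t * \<psi> (P t)) * (C * exp (- \<delta> * t)))) (at t)"
    by (rule DERIV_diff[OF DERIV_diff[OF AqP_deriv[OF assms] d3] d5])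
  have ee: "exp (\<delta> * t) * exp (- \<delta> * t) = 1" by (simp add: exp_add[symmetric])
  have eq1: "(C * P t * \<psi> (P t) - (\<gamma>/\<beta>) * \<psi> (P t)) - E * (- \<delta> * exp (- \<delta> * t))
      - (C * (- \<delta> * exp (- \<delta> * t)) * J (P t) + exp (\<delta> * t) * (P t * \<psi> (P t)) * (C * exp (- \<delta> * t)))
      = (C * P t * \<psi> (P t) - (\<gamma>/\<beta>) * \<psi> (P t)) - E * (- \<delta> * exp (- \<delta> * t))
      - (C * (- \<delta> * exp (- \<delta> * t)) * J (P t) + (exp (\<delta> * t) * exp (- \<delta> * t)) * (P t * \<psi> (P t)) * C)"
    by (simp add: algebra_simps)
  have eq2: "(C * P t * \<psi> (P t) - (\<gamma>/\<beta>) * \<psi> (P t)) - E * (- \<delta> * exp (- \<delta> * t))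
      - (C * (- \<delta> * exp (- \<delta> * t)) * J (P t) + (exp (\<delta> * t) * exp (- \<delta> * t)) * (P t * \<psi> (P t)) * C)
     = - (\<gamma>/\<beta>) * \<psi> (P t) + \<delta> * (Aq (P t) - Ifun \<beta> \<gamma> \<delta> S E R N \<psi> uinf u0 t)"
    unfolding ee If_eq by (simp add: algebra_simps)
  have d': "(Ifun \<beta> \<gamma> \<delta> S E R N \<psi> uinf u0 has_real_derivative
      (C * P t * \<psi> (P t) - (\<gamma>/\<beta>) * \<psi> (P t)) - E * (- \<delta> * exp (- \<delta> * t))
      - (C * (- \<delta> * exp (- \<delta> * t)) * J (P t) + exp (\<delta> * t) * (P t * \<psi> (P t)) * (C * exp (- \<delta> * t)))) (at t)"
    by (simp only: If_fun d)
  show ?thesis by (rule DERIV_cong[OF d']) (simp only: eq1 eq2)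
qed

lemma psiP_deriv: assumes "t > 0"
  shows "((\<lambda>t. \<psi> (P t)) has_real_derivative (- (\<gamma> + \<delta>) * \<psi> (P t) + \<delta> * F (P t))) (at t)"
proof -
  have Pi: "P t \<in> {uinf<..<u0}" using Pi_open[OF assms] .
  have u: "P t > 0" using Pi uinf_pos by auto
  have p: "\<psi> (P t) > 0" using Pi psi_pos by auto
  have "((\<lambda>t. \<psi> (P t)) has_real_derivative \<psi>' (P t) * (- (P t * \<psi> (P t)))) (at t)"
    by (rule DERIV_chain2[OF _ P_deriv[OF assms]]) (use psi_deriv Pi in auto)
  moreover have "\<psi>' (P t) * (- (P t * \<psi> (P t))) = - (\<gamma> + \<delta>) * \<psi> (P t) + \<delta> * F (P t)"
    unfolding psi'_eq[OF Pi] using u p by (simp add: field_simps)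
  ultimately show ?thesis by (rule DERIV_cong)
qed

lemma If_cont: assumes "T \<ge> 0" shows "continuous_on {0..T} (Ifun \<beta> \<gamma> \<delta> S E R N \<psi> uinf u0)"
   "continuous_on {0..T} (\<lambda>t. \<psi> (P t))"
proof -
  obtain a where a: "uinf < a" "a \<le> u0" "continuous_on {0..T} P" "P ` {0..T} \<subseteq> {a..u0}"
    using P_cont_gen[OF assms] by blast
  have Ppos: "\<forall>x\<in>{0..T}. P x \<noteq> 0" using a uinf_pos by fastforce
  have cJ: "continuous_on {0..T} (\<lambda>t. J (P t))"
    by (rule continuous_on_compose2[OF J_cont[OF a(1)] a(3) a(4)])
  show "continuous_on {0..T} (\<lambda>t. \<psi> (P t))"
    by (rule continuous_on_compose2[OF continuous_on_subset[OF psi_cont] a(3) a(4)]) (use a in auto)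
  show "continuous_on {0..T} (Ifun \<beta> \<gamma> \<delta> S E R N \<psi> uinf u0)"
    unfolding If_fun Aq_def
    by (intro continuous_intros a(3) cJ Ppos)
qed

lemma If_0: "Ifun \<beta> \<gamma> \<delta> S E R N \<psi> uinf u0 0 = I"
proof -
  have "(\<gamma>/\<beta>) * ln u0 = - R" using lnu0 pos by (simp add: field_simps)
  then show ?thesis unfolding If_eq P_0 J_u0 Aq_def using Cu0 N_def by simp
qed

lemma If_psi: assumes "t \<ge> 0" shows "Ifun \<beta> \<gamma> \<delta> S E R N \<psi> uinf u0 t = \<psi> (P t) / \<beta>"
proof (cases "t = 0")
  case True
  then show ?thesis using If_0 P_0 psi_init pos by simp
next
  case False
  then have t: "t > 0" using assms by simp
  define G where "G s = Ifun \<beta> \<gamma> \<delta> S E R N \<psi> uinf u0 s - \<psi> (P s) / \<beta>" for s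
  define H where "H s = exp (\<delta> * s) * G s" for s
  have "continuous_on {0..t} H" unfolding H_def G_def
    by (intro continuous_intros If_cont assms) (use pos in auto)
  moreover have "DERIV H s :> 0" if s: "0 < s" "s < t" for s
  proof -
    have dG: "(G has_real_derivative
       (- (\<gamma>/\<beta>) * \<psi> (P s) + \<delta> * (Aq (P s) - Ifun \<beta> \<gamma> \<delta> S E R N \<psi> uinf u0 s))
       - (- (\<gamma> + \<delta>) * \<psi> (P s) + \<delta> * F (P s)) / \<beta>) (at s)"
      unfolding G_def[abs_def] by (intro DERIV_diff DERIV_cdivide If_deriv_raw psiP_deriv s)
    have dE: "((\<lambda>s. exp (\<delta> * s)) has_real_derivative \<delta> * exp (\<delta> * s)) (at s)"
      by (intro derivative_eq_intros refl) auto
    have "(H has_real_derivative \<delta> * exp (\<delta> * s) * G s +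
       ((- (\<gamma>/\<beta>) * \<psi> (P s) + \<delta> * (Aq (P s) - Ifun \<beta> \<gamma> \<delta> S E R N \<psi> uinf u0 s))
       - (- (\<gamma> + \<delta>) * \<psi> (P s) + \<delta> * F (P s)) / \<beta>) * exp (\<delta> * s)) (at s)"
      unfolding H_def[abs_def] by (rule DERIV_mult[OF dE dG])
    moreover have "\<delta> * exp (\<delta> * s) * G s +
       ((- (\<gamma>/\<beta>) * \<psi> (P s) + \<delta> * (Aq (P s) - Ifun \<beta> \<gamma> \<delta> S E R N \<psi> uinf u0 s))
       - (- (\<gamma> + \<delta>) * \<psi> (P s) + \<delta> * F (P s)) / \<beta>) * exp (\<delta> * s) = 0"
      unfolding G_def F_Aq using pos by (simp add: field_simps)
    ultimately show ?thesis by (rule DERIV_cong)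
  qed
  ultimately have "H t = H 0" using t by (intro DERIV_isconst_end) auto
  moreover have "H 0 = 0" unfolding H_def G_def using If_0 P_0 psi_init pos by simp
  ultimately have "G t = 0" unfolding H_def by simp
  then show ?thesis unfolding G_def by simp
qed


lemma If_pos: "t \<ge> 0 \<Longrightarrow> Ifun \<beta> \<gamma> \<delta> S E R N \<psi> uinf u0 t > 0"
  using If_psi[of t] P_in[of t] psi_pos pos by auto

lemma If_deriv: assumes "T > 0"
  shows "(Ifun \<beta> \<gamma> \<delta> S E R N \<psi> uinf u0 has_real_derivative
     (- ((\<gamma> + \<delta>)/\<beta>) * \<psi> (P T) + \<delta> * (N - C * P T + (\<gamma>/\<beta>) * ln (P T)))) (at T)"
  using If_deriv_raw[OF assms]
proof (rule DERIV_cong)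
  show "- (\<gamma>/\<beta>) * \<psi> (P T) + \<delta> * (Aq (P T) - Ifun \<beta> \<gamma> \<delta> S E R N \<psi> uinf u0 T)
     = - ((\<gamma> + \<delta>)/\<beta>) * \<psi> (P T) + \<delta> * (N - C * P T + (\<gamma>/\<beta>) * ln (P T))"
  proof -
    have eqI: "Ifun \<beta> \<gamma> \<delta> S E R N \<psi> uinf u0 T = \<psi> (P T) / \<beta>" using If_psi assms by simp
    show ?thesis unfolding eqI Aq_def using pos by (simp add: field_simps)
  qed
qed

lemma If_lim: "(Ifun \<beta> \<gamma> \<delta> S E R N \<psi> uinf u0 \<longlongrightarrow> 0) at_top"
proof (rule tendstoI)
  fix e :: real assume e: "e > 0"
  define \<epsilon> where "\<epsilon> = e * \<beta> / K"
  have \<epsilon>: "\<epsilon> > 0" unfolding \<epsilon>_def using e pos Kpos by simp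
  obtain T where T: "\<forall>t\<ge>T. P t < uinf + \<epsilon>" using P_small[OF \<epsilon>] by blast
  have "dist (Ifun \<beta> \<gamma> \<delta> S E R N \<psi> uinf u0 t) 0 < e" if t: "t \<ge> max T 0" for t
  proof -
    have t0: "t \<ge> 0" using t by simp
    have Pi: "uinf < P t" "P t \<le> u0" using P_in[OF t0] by auto
    have "\<psi> (P t) < K * (P t - uinf)" by (rule psi_bound[OF Pi])
    also have "\<dots> < K * \<epsilon>"
    proof -
      have "P t - uinf < \<epsilon>" using T t by auto
      then show ?thesis using Kpos by simp
    qed
    also have "\<dots> = e * \<beta>" unfolding \<epsilon>_def using Kpos by simp
    finally have "\<psi> (P t) / \<beta> < e" using pos by (simp add: divide_less_eq)
    moreover have "\<psi> (P t) > 0" using psi_pos Pi by auto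
    ultimately show ?thesis using If_psi[OF t0] pos by simp
  qed
  then show "\<forall>\<^sub>F t in at_top. dist (Ifun \<beta> \<gamma> \<delta> S E R N \<psi> uinf u0 t) 0 < e"
    unfolding eventually_at_top_linorder by blast
qed

lemma If_max: "\<exists>T2>0. (Ifun \<beta> \<gamma> \<delta> S E R N \<psi> uinf u0 has_real_derivative 0) (at T2)
        \<and> (\<forall>t\<ge>0. Ifun \<beta> \<gamma> \<delta> S E R N \<psi> uinf u0 t \<le> Ifun \<beta> \<gamma> \<delta> S E R N \<psi> uinf u0 T2)"
proof -
  define f where "f = Ifun \<beta> \<gamma> \<delta> S E R N \<psi> uinf u0"
  define D where "D T = - ((\<gamma> + \<delta>)/\<beta>) * \<psi> (P T) + \<delta> * (N - C * P T + (\<gamma>/\<beta>) * ln (P T))" for T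
  obtain a where a: "uinf < a" "a \<le> u0" "continuous_on {0..1} P" "P ` {0..1} \<subseteq> {a..u0}"
    using P_cont_gen[of 1] by auto
  have Ppos: "\<forall>x\<in>{0..1}. P x \<noteq> 0" using a uinf_pos by fastforce
  have cD: "continuous_on {0..1} D" unfolding D_def
    by (intro continuous_intros If_cont a(3) Ppos) simp
  have D0: "D 0 > 0"
  proof -
    have "(\<gamma>/\<beta>) * ln u0 = - R" using lnu0 pos by (simp add: field_simps)
    then have "D 0 = - (\<gamma> + \<delta>) * I + \<delta> * (E + I)"
      unfolding D_def P_0 psi_init using Cu0 N_def pos by (simp add: field_simps)
    moreover have "\<delta> * E > \<gamma> * I" using A2 pos by (simp add: field_simps)
    ultimately show ?thesis by (simp add: algebra_simps)
  qed
  obtain d where d: "d > 0" "\<forall>x'\<in>{0..1}. dist x' 0 < d \<longrightarrow> dist (D x') (D 0) < D 0"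
    using cD D0 unfolding continuous_on_iff by (metis atLeastAtMost_iff order_refl zero_le_one)
  define T1 where "T1 = min (d/2) 1"
  have T1: "T1 > 0" "T1 \<le> 1" "T1 < d" using d unfolding T1_def by auto
  have Dpos: "D x > 0" if "0 \<le> x" "x \<le> T1" for x
  proof -
    have "dist (D x) (D 0) < D 0" using d that T1 by (auto simp: dist_real_def)
    then show ?thesis by (simp add: dist_real_def)
  qed
  have cf1: "continuous_on {0..T1} f" unfolding f_def using If_cont[of T1] T1 by simp
  have df: "(f has_real_derivative D x) (at x)" if "x > 0" for x
    unfolding f_def D_def using If_deriv[OF that] .
  obtain l z where z: "0 < z" "z < T1" "DERIV f z :> l" "f T1 - f 0 = (T1 - 0) * l"
    using MVT[OF T1(1) cf1] df real_differentiable_def by blast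
  have "l = D z" using DERIV_unique[OF z(3) df[OF z(1)]] .
  then have "l > 0" using Dpos z by simp
  then have "T1 * l > 0" using T1 by simp
  then have fT1: "f T1 > f 0" using z by simp
  have f0: "f 0 > 0" unfolding f_def using If_pos by simp
  have "\<forall>\<^sub>F t in at_top. f t < f T1"
    using order_tendstoD(2)[OF If_lim[folded f_def], of "f T1"] fT1 f0 by simp
  then obtain M where M: "\<forall>t\<ge>M. f t < f T1" unfolding eventually_at_top_linorder by blast
  define M' where "M' = max M (T1 + 1)"
  have cfM: "continuous_on {0..M'} f" unfolding f_def using If_cont[of M'] T1 unfolding M'_def by simp
  obtain T2 where T2: "T2 \<in> {0..M'}" "\<forall>y\<in>{0..M'}. f y \<le> f T2"
  proof -
    have "0 \<le> M'" using T1 unfolding M'_def by auto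
    then have "{0..M'} \<noteq> {}" by simp
    then show ?thesis using continuous_attains_sup[OF compact_Icc _ cfM] that by blast
  qed
  have "f T1 \<le> f T2" using T2 T1 unfolding M'_def by auto
  then have T2pos: "T2 > 0" using fT1 T2 by (cases "T2 = 0") auto
  have T2M: "T2 < M" using M \<open>f T1 \<le> f T2\<close> by (meson not_less order.strict_trans2)
  have glob: "\<forall>t\<ge>0. f t \<le> f T2"
  proof (intro allI impI)
    fix t :: real assume "t \<ge> 0"
    show "f t \<le> f T2"
    proof (cases "t \<le> M'")
      case True then show ?thesis using T2 \<open>t \<ge> 0\<close> by auto
    next
      case False then have "t \<ge> M" unfolding M'_def by auto
      then show ?thesis using M \<open>f T1 \<le> f T2\<close> by fastforce
    qed
  qed
  have "D T2 = 0"
  proof (rule DERIV_local_max[OF df[OF T2pos] T2pos])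
    show "\<forall>y. \<bar>T2 - y\<bar> < T2 \<longrightarrow> f y \<le> f T2" using glob by auto
  qed
  then have "(f has_real_derivative 0) (at T2)" using df[OF T2pos] by simp
  then show ?thesis using T2pos glob unfolding f_def by blast
qed

end

theorem theorem10:
  fixes \<beta> \<gamma> \<delta> S E I R N \<alpha> u0 uinf :: real
    and \<psi> \<psi>' :: "real \<Rightarrow> real"
  assumes pos: "\<beta> > 0" "\<gamma> > 0" "\<delta> > 0"
    and N_def: "N = S + E + I + R" and Npos: "N > 0"
    and A1: "I > 0"
    and A2: "E > (\<gamma>/\<delta>) * I"
    and A3: "S > \<delta> * E / (\<beta> * I)"
    and A4: "R \<ge> 0" "N > S * exp ((\<beta>/\<gamma>) * R) + R"
    and alpha: "R < \<alpha>" "\<alpha> < N"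
      "\<alpha> = N - S * exp ((\<beta>/\<gamma>) * R) * exp (- (\<beta>/\<gamma>) * \<alpha>)"
    and A5: "S < (\<gamma>/\<beta>) * exp ((\<beta>/\<gamma>) * (\<alpha> - R))"
    and u0_def: "u0 = exp (- (\<beta>/\<gamma>) * R)"
    and uinf_def: "uinf = exp (- (\<beta>/\<gamma>) * \<alpha>)"
    and psi_cont: "continuous_on {uinf<..u0} \<psi>"
    and psi_pos: "\<forall>u\<in>{uinf<..u0}. \<psi> u > 0"
    and psi_deriv: "\<forall>u\<in>{uinf<..<u0}. (\<psi> has_real_derivative \<psi>' u) (at u)"
    and psi'_cont: "continuous_on {uinf<..<u0} \<psi>'"
    and psi_ode: "\<forall>u\<in>{uinf<..<u0}.
        \<psi>' u * \<psi> u - ((\<gamma> + \<delta>) / u) * \<psi> u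
          = - \<delta> * (\<beta> * N - \<beta> * S * exp ((\<beta>/\<gamma>) * R) * u + \<gamma> * ln u) / u"
    and psi_init: "\<psi> u0 = \<beta> * I"
  shows "((\<lambda>t. Ifun \<beta> \<gamma> \<delta> S E R N \<psi> uinf u0 t) \<longlongrightarrow> 0) at_top
    \<and> (\<forall>t\<ge>0. Ifun \<beta> \<gamma> \<delta> S E R N \<psi> uinf u0 t > 0)
    \<and> (\<forall>T>0. ((\<lambda>t. Ifun \<beta> \<gamma> \<delta> S E R N \<psi> uinf u0 t) has_real_derivative
          (- ((\<gamma> + \<delta>)/\<beta>) * \<psi> (phiInv \<psi> uinf u0 T)
           + \<delta> * (N - S * exp ((\<beta>/\<gamma>) * R) * phiInv \<psi> uinf u0 T
                  + (\<gamma>/\<beta>) * ln (phiInv \<psi> uinf u0 T)))) (at T))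
    \<and> (\<exists>T2>0. ((\<lambda>t. Ifun \<beta> \<gamma> \<delta> S E R N \<psi> uinf u0 t) has_real_derivative 0) (at T2)
        \<and> (\<forall>t\<ge>0. Ifun \<beta> \<gamma> \<delta> S E R N \<psi> uinf u0 t \<le> Ifun \<beta> \<gamma> \<delta> S E R N \<psi> uinf u0 T2))"
proof -
  interpret M: seir \<beta> \<gamma> \<delta> S E I R N \<alpha> u0 uinf "S * exp ((\<beta>/\<gamma>) * R)"
    "\<gamma> / uinf - \<beta> * (S * exp ((\<beta>/\<gamma>) * R))" \<psi> \<psi>'
    "\<lambda>u. \<beta> * N - \<beta> * (S * exp ((\<beta>/\<gamma>) * R)) * u + \<gamma> * ln u"
    "\<lambda>\<xi>. 1 / (\<xi> * \<psi> \<xi>)" "phiF \<psi> u0" "phiInv \<psi> uinf u0"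
    by unfold_locales (use assms in auto)
  show ?thesis
    using M.If_lim M.If_pos M.If_deriv M.If_max by simp
qed

end
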